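(* Consider a run of RLS-GP on the target $\mathrm{AND}_n$ with $F = \{\mathrm{AND}, \mathrm{OR}\}$, $L = \{x_1, \ldots, x_n\}$, a tree size limit $\ell \ge n$, and the complete truth table as fitness. Let $T$ be the number of iterations before the optimum is found, and let $T_0 \le T$ be the number of these iterations in which the parent (current) tree is not full, i.e. has fewer than $\ell$ leaves. Then $E[T_0] = O(\ell\, n \log^2 n)$.
   Context: Programs are finite rooted binary trees (the empty tree is allowed) whose internal nodes are labelled by binary Boolean functions from $F$ and whose leaves are labelled by literals from $L$; a program computes a Boolean function of $(x_1,\dots,x_n)$ in the obvious way. $\mathrm{AND}_n(x) = x_1 \wedge \dots \wedge x_n$. The fitness (to be minimised) of a program $X$ is $f(X) = |\{x \in \{0,1\}^n : X(x) \ne \mathrm{AND}_n(x)\}|$; the optimum is a tree of fitness $0$. LeafCount$(X)$ is the number of leaves of $X$. HVL-Prime with subtree deletion, applied to a tree $X$: choose $op \in \{\mathrm{INS}, \mathrm{DEL}, \mathrm{SUB}\}$, a literal $l \in L$ and a function $g \in F$, independently and uniformly at random. If $X$ is empty, the result is the single leaf $l$. Otherwise: if $op = \mathrm{INS}$, choose a node $x$ of $X$ uniformly at random and replace it by a new node labelled $g$ whose two children are the subtree rooted at $x$ and a new leaf $l$, in uniformly random order; if $op = \mathrm{DEL}$, choose a node $x$ of $X$ (leaf or internal) uniformly at random and replace the parent of $x$ by the sibling of $x$; if $op = \mathrm{SUB}$, choose a leaf of $X$ uniformly at random and replace it by $l$. RLS-GP with tree size limit $\ell$: start with the empty tree $X$;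 in each iteration let $X' := $ HVL-Prime$(X)$, and if LeafCount$(X') \le \ell$ and $f(X') \le f(X)$ then set $X := X'$. Asymptotics are as $n \to \infty$. *)

theory Defs
  imports "HOL-Probability.Probability"
begin

datatype func = FAnd | FOr

text \<open>Programs: possibly empty binary trees; leaves carry literal indices i (meaning x_i, 1 \<le> i \<le> n).
  The constructor GEmpty is only meant to occur as the whole tree.\<close>
datatype gptree = GEmpty | GLeaf nat | GNode func gptree gptree

fun apply_func :: "func \<Rightarrow> bool \<Rightarrow> bool \<Rightarrow> bool" where
  "apply_func FAnd a b = (a \<and> b)"
| "apply_func FOr a b = (a \<or> b)"

fun eval_tree :: "gptree \<Rightarrow> nat set \<Rightarrow> bool" where
  "eval_tree GEmpty S = False"
| "eval_tree (GLeaf i) S = (i \<in> S)"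
| "eval_tree (GNode g a b) S = apply_func g (eval_tree a S) (eval_tree b S)"

text \<open>Inputs x \<in> {0,1}^n are identified with subsets S of {1..n}; AND_n(x) = 1 iff S = {1..n}.
  The empty tree computes no function and is counted wrong on every input (fitness 2^n).\<close>
definition fitness :: "nat \<Rightarrow> gptree \<Rightarrow> nat" where
  "fitness n X = (if X = GEmpty then 2 ^ n
     else card {S. S \<subseteq> {1..n} \<and> eval_tree X S \<noteq> (S = {1..n})})"

fun leaf_count :: "gptree \<Rightarrow> nat" where
  "leaf_count GEmpty = 0"
| "leaf_count (GLeaf i) = 1"
| "leaf_count (GNode g a b) = leaf_count a + leaf_count b"

fun node_count :: "gptree \<Rightarrow> nat" where
  "node_count GEmpty = 0"
| "node_count (GLeaf i) = 1"
| "node_count (GNode g a b) = 1 + node_count a + node_count b"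

text \<open>Nodes are addressed by their preorder index (0 = root). Replace subtree at index k by f of it.\<close>
fun modify_at :: "nat \<Rightarrow> (gptree \<Rightarrow> gptree) \<Rightarrow> gptree \<Rightarrow> gptree" where
  "modify_at 0 f t = f t"
| "modify_at (Suc k) f (GNode g a b) =
     (if k < node_count a then GNode g (modify_at k f a) b
      else GNode g a (modify_at (k - node_count a) f b))"
| "modify_at (Suc k) f t = t"

text \<open>Deletion of the node with preorder index k: its parent is replaced by its sibling.
  The root has no parent; deleting it gives the empty tree (which is never accepted anyway).\<close>
fun del_at :: "nat \<Rightarrow> gptree \<Rightarrow> gptree" where
  "del_at 0 t = GEmpty"
| "del_at (Suc k) (GNode g a b) =
     (if k = 0 then b
      else if k < node_count a then GNode g (del_at k a) b
      else if k = node_count a then a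
      else GNode g a (del_at (k - node_count a) b))"
| "del_at (Suc k) t = t"

text \<open>Substitute the j-th leaf (0-based, left to right) by the literal l.\<close>
fun sub_leaf :: "nat \<Rightarrow> nat \<Rightarrow> gptree \<Rightarrow> gptree" where
  "sub_leaf j l GEmpty = GEmpty"
| "sub_leaf j l (GLeaf i) = GLeaf l"
| "sub_leaf j l (GNode g a b) =
     (if j < leaf_count a then GNode g (sub_leaf j l a) b
      else GNode g a (sub_leaf (j - leaf_count a) l b))"

datatype hvl_op = INS | DEL | SUB

definition hvl_prime :: "nat \<Rightarrow> gptree \<Rightarrow> gptree pmf" where
  "hvl_prime n X = do {
     op \<leftarrow> pmf_of_set {INS, DEL, SUB};
     l \<leftarrow> pmf_of_set {1..n};
     g \<leftarrow> pmf_of_set {FAnd, FOr};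
     (if X = GEmpty then return_pmf (GLeaf l)
      else (case op of
        INS \<Rightarrow> do {
          k \<leftarrow> pmf_of_set {..<node_count X};
          b \<leftarrow> pmf_of_set (UNIV :: bool set);
          return_pmf (modify_at k (\<lambda>s. if b then GNode g s (GLeaf l) else GNode g (GLeaf l) s) X) }
      | DEL \<Rightarrow> map_pmf (\<lambda>k. del_at k X) (pmf_of_set {..<node_count X})
      | SUB \<Rightarrow> map_pmf (\<lambda>j. sub_leaf j l X) (pmf_of_set {..<leaf_count X})))
   }"

definition rls_step :: "nat \<Rightarrow> nat \<Rightarrow> gptree \<Rightarrow> gptree pmf" where
  "rls_step n ell X = map_pmf
     (\<lambda>X'. if leaf_count X' \<le> ell \<and> fitness n X' \<le> fitness n X then X' else X) (hvl_prime n X)"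

fun rls_state :: "nat \<Rightarrow> nat \<Rightarrow> nat \<Rightarrow> gptree pmf" where
  "rls_state n ell 0 = return_pmf GEmpty"
| "rls_state n ell (Suc t) = rls_state n ell t \<bind> rls_step n ell"

text \<open>T_0 = number of iterations t (before the optimum is found, i.e. with parent fitness > 0)
  whose parent has fewer than ell leaves, i.e. the sum over t of the indicator of that event.
  Its expectation is, by monotone convergence / linearity, the sum of the probabilities.\<close>
definition expected_T0 :: "nat \<Rightarrow> nat \<Rightarrow> ennreal" where
  "expected_T0 n ell = (\<Sum>t. ennreal (measure_pmf.prob (rls_state n ell t)
       {X. fitness n X \<noteq> 0 \<and> leaf_count X < ell}))"

end

theory Submission
  imports Defs
begin

fun wft :: "nat \<Rightarrow> gptree \<Rightarrow> bool" where
  "wft n GEmpty = False"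
| "wft n (GLeaf i) = (i \<in> {1..n})"
| "wft n (GNode g a b) = (wft n a \<and> wft n b)"

definition inv_t :: "nat \<Rightarrow> gptree \<Rightarrow> bool" where
  "inv_t n X = (X = GEmpty \<or> wft n X)"


lemma apply_func_TT: "apply_func g True True" by (cases g) auto

lemma wft_eval_full': "wft n t \<Longrightarrow> eval_tree t {1..n}"
  by (induction t) (auto simp: apply_func_TT)

lemma wft_modify: "wft n t \<Longrightarrow> (\<And>s. wft n s \<Longrightarrow> wft n (f s)) \<Longrightarrow> wft n (modify_at k f t)"
  by (induction k f t rule: modify_at.induct) auto

lemma wft_del_pos: "wft n t \<Longrightarrow> k \<noteq> 0 \<Longrightarrow> wft n (del_at k t)"
proof (induction k t rule: del_at.induct)
  case (2 k g a b)
  show ?case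
  proof (cases "k = 0")
    case True then show ?thesis using "2.prems" by simp
  next
    case False
    then show ?thesis using 2 by auto
  qed
qed auto

lemma wft_del: "wft n t \<Longrightarrow> del_at k t = GEmpty \<or> wft n (del_at k t)"
  using wft_del_pos by (cases k) auto

lemma wft_sub: "wft n t \<Longrightarrow> l \<in> {1..n} \<Longrightarrow> wft n (sub_leaf j l t)"
  by (induction j l t rule: sub_leaf.induct) auto

lemma hvl_support:
  assumes "inv_t n X" "Y \<in> set_pmf (hvl_prime n X)" "n \<ge> 1"
  shows "inv_t n Y"
proof -
  have fin: "finite {1..n}" "{1..n} \<noteq> {}" using assms(3) by auto
  obtain op l g where l: "l \<in> {1..n}" and
    Y: "Y \<in> set_pmf (if X = GEmpty then return_pmf (GLeaf l)
      else (case op of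
        INS \<Rightarrow> do {
          k \<leftarrow> pmf_of_set {..<node_count X};
          b \<leftarrow> pmf_of_set (UNIV :: bool set);
          return_pmf (modify_at k (\<lambda>s. if b then GNode g s (GLeaf l) else GNode g (GLeaf l) s) X) }
      | DEL \<Rightarrow> map_pmf (\<lambda>k. del_at k X) (pmf_of_set {..<node_count X})
      | SUB \<Rightarrow> map_pmf (\<lambda>j. sub_leaf j l X) (pmf_of_set {..<leaf_count X})))"
    using assms(2) fin unfolding hvl_prime_def
    by (simp only: set_bind_pmf set_pmf_of_set) (auto simp: set_pmf_of_set)
  show ?thesis
  proof (cases "X = GEmpty")
    case True then show ?thesis using Y l by (simp add: inv_t_def)
  next
    case False
    then have w: "wft n X" using assms(1) by (simp add: inv_t_def)
    show ?thesis
    proof (cases op)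
      case INS
      then obtain k b where "Y = modify_at k (\<lambda>s. if b then GNode g s (GLeaf l) else GNode g (GLeaf l) s) X"
        using Y False by (auto simp: set_bind_pmf)
      then show ?thesis using w l by (auto simp: inv_t_def intro!: wft_modify)
    next
      case DEL
      then obtain k where "Y = del_at k X" using Y False by auto
      then show ?thesis using wft_del[OF w, of k] by (auto simp: inv_t_def)
    next
      case SUB
      then obtain j where "Y = sub_leaf j l X" using Y False by auto
      then show ?thesis using wft_sub[OF w l] by (auto simp: inv_t_def)
    qed
  qed
qed

lemma step_support:
  assumes "inv_t n X" "Y \<in> set_pmf (rls_step n ell X)" "n \<ge> 1"
  shows "inv_t n Y"
  using assms hvl_support by (auto simp: rls_step_def split: if_splits)

lemma state_support:
  "n \<ge> 1 \<Longrightarrow> Y \<in> set_pmf (rls_state n ell t) \<Longrightarrow> inv_t n Y"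
proof (induction t arbitrary: Y)
  case 0 then show ?case by (simp add: inv_t_def)
next
  case (Suc t) then show ?case using step_support by (auto) blast
qed

lemma geo_le: "(n::nat) \<ge> 2 \<Longrightarrow> (\<Sum>j<k. n^j) \<le> n^k"
proof (induction k)
  case 0 then show ?case by simp
next
  case (Suc k)
  have "(\<Sum>j<Suc k. n^j) = (\<Sum>j<k. n^j) + n^k" by simp
  also have "\<dots> \<le> n^k + n^k" using Suc by simp
  also have "\<dots> \<le> n * n^k" using Suc.prems by (simp add: mult_2[symmetric])
  finally show ?case by simp
qed

lemma count_small:
  assumes "(n::nat) \<ge> 2"
  shows "card {S. S \<subseteq> {1..n} \<and> n - card S < k} \<le> n^k"
proof -
  define A where "A j = {S. S \<subseteq> {1..n} \<and> n - card S = j}" for j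
  have eq: "{S. S \<subseteq> {1..n} \<and> n - card S < k} = (\<Union>j\<in>{..<k}. A j)"
    by (auto simp: A_def)
  have cA: "card (A j) \<le> n^j" for j
  proof (cases "j \<le> n")
    case True
    have "A j = {S. S \<subseteq> {1..n} \<and> card S = n - j}"
      unfolding A_def
    proof (intro Collect_cong iffI)
      fix S assume a: "S \<subseteq> {1..n} \<and> n - card S = j"
      then have "card S \<le> n" using card_mono[of "{1..n}" S] by simp
      then show "S \<subseteq> {1..n} \<and> card S = n - j" using a by auto
    next
      fix S assume "S \<subseteq> {1..n} \<and> card S = n - j"
      then show "S \<subseteq> {1..n} \<and> n - card S = j" using True by auto
    qed
    then have "card (A j) = n choose (n - j)" using n_subsets[of "{1..n}" "n - j"] by simp
    also have "\<dots> = n choose j" using binomial_symmetric[OF True] by simp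
    also have "\<dots> \<le> n^j" using binomial_le_pow[OF True] .
    finally show ?thesis .
  next
    case False
    then have "A j = {}" unfolding A_def by auto
    then show ?thesis by simp
  qed
  have "card (\<Union>j\<in>{..<k}. A j) \<le> (\<Sum>j<k. card (A j))" by (rule card_UN_le) simp
  also have "\<dots> \<le> (\<Sum>j<k. n^j)" by (rule sum_mono) (rule cA)
  also have "\<dots> \<le> n^k" using geo_le[OF assms] .
  finally show ?thesis using eq by simp
qed

lemma sum_cosize_lb:
  assumes n: "(n::nat) \<ge> 2" and FP: "FP \<subseteq> {S. S \<subseteq> {1..n}}" and k: "2 * n^k \<le> card FP"
  shows "k * card FP \<le> 2 * (\<Sum>S\<in>FP. n - card S)"
proof -
  have finP: "finite {S. S \<subseteq> {1..n}}" by simp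
  have fin: "finite FP" using FP finite_subset finP by blast
  define B where "B = {S\<in>FP. k \<le> n - card S}"
  have "FP - B \<subseteq> {S. S \<subseteq> {1..n} \<and> n - card S < k}" using FP by (auto simp: B_def)
  moreover have "finite {S. S \<subseteq> {1..n} \<and> n - card S < k}" by (rule finite_subset[OF _ finP]) auto
  ultimately have "card (FP - B) \<le> card {S. S \<subseteq> {1..n} \<and> n - card S < k}" by (rule card_mono[rotated])
  then have c1: "card (FP - B) \<le> n^k" using count_small[OF n, of k] by linarith
  have BF: "B \<subseteq> FP" by (auto simp: B_def)
  have finB: "finite B" using fin BF finite_subset by blast
  have "card (FP - B) = card FP - card B" by (rule card_Diff_subset[OF finB BF])
  moreover have "card B \<le> card FP" by (rule card_mono[OF fin BF])
  ultimately have cFP: "card FP = card B + card (FP - B)" by simp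
  have cB: "card FP \<le> 2 * card B" using k c1 cFP by linarith
  have "k * card B = (\<Sum>S\<in>B. k)" by simp
  also have "\<dots> \<le> (\<Sum>S\<in>B. n - card S)" by (rule sum_mono) (simp add: B_def)
  also have "\<dots> \<le> (\<Sum>S\<in>FP. n - card S)" by (rule sum_mono2) (use fin in \<open>auto simp: B_def\<close>)
  finally have "k * card B \<le> (\<Sum>S\<in>FP. n - card S)" .
  then have "k * card FP \<le> k * (2 * card B)" using cB by simp
  then show ?thesis using \<open>k * card B \<le> _\<close> by linarith
qed

lemma sum_cosize_ge_card:
  assumes FP: "FP \<subseteq> {S. S \<subseteq> {1..n} \<and> S \<noteq> {1..n}}"
  shows "card FP \<le> (\<Sum>S\<in>FP. n - card S)"
proof -
  have fin: "finite FP" using FP by (rule finite_subset) simp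
  have "card FP = (\<Sum>S\<in>FP. 1)" by simp
  also have "\<dots> \<le> (\<Sum>S\<in>FP. n - card S)"
  proof (rule sum_mono)
    fix S assume "S \<in> FP"
    then have "S \<subset> {1..n}" using FP by auto
    then have "card S < card {1..n}" by (intro psubset_card_mono) auto
    then show "1 \<le> n - card S" by simp
  qed
  finally show ?thesis .
qed

lemma double_count:
  assumes FP: "FP \<subseteq> {S. S \<subseteq> {1..n}}"
  shows "(\<Sum>l\<in>{1..n}. card {S\<in>FP. l \<notin> S}) = (\<Sum>S\<in>FP. n - card S)"
proof -
  have fin: "finite FP" using FP by (rule finite_subset) simp
  have "(\<Sum>l\<in>{1..n}. card {S\<in>FP. l \<notin> S}) = (\<Sum>l\<in>{1..n}. \<Sum>S\<in>FP. if l \<notin> S then 1 else 0)"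
    by (rule sum.cong) (simp_all add: sum.inter_filter[OF fin, symmetric])
  also have "\<dots> = (\<Sum>S\<in>FP. \<Sum>l\<in>{1..n}. if l \<notin> S then 1 else 0)" by (rule sum.swap)
  also have "\<dots> = (\<Sum>S\<in>FP. card ({1..n} - S))"
  proof (rule sum.cong)
    fix S assume "S \<in> FP"
    have "({1..n} - S) = {l\<in>{1..n}. l \<notin> S}" by auto
    then show "(\<Sum>l\<in>{1..n}. if l \<notin> S then 1 else (0::nat)) = card ({1..n} - S)"
      by (simp add: sum.inter_filter[symmetric])
  qed simp
  also have "\<dots> = (\<Sum>S\<in>FP. n - card S)"
  proof (rule sum.cong)
    fix S assume "S \<in> FP"
    then have "S \<subseteq> {1..n}" using FP by auto
    then show "card ({1..n} - S) = n - card S" by (simp add: card_Diff_subset finite_subset)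
  qed simp
  finally show ?thesis .
qed

definition wpot :: "nat \<Rightarrow> nat \<Rightarrow> real" where
  "wpot n j = (if j < n^8 then 1 / real j else 8 * ln (real n) / (real j * ln (real j)))"

definition Vpot :: "nat \<Rightarrow> nat \<Rightarrow> real" where
  "Vpot n f = (\<Sum>j\<in>{1..f}. wpot n j)"

lemma ln_n_pos: "n \<ge> 2 \<Longrightarrow> ln (real n) > 0" by simp

lemma ln_big: assumes "n \<ge> 2" "n^8 \<le> j" shows "8 * ln (real n) \<le> ln (real j)" "ln (real j) > 0"
proof -
  have "real n ^ 8 \<le> real j" using assms(2) by (metis of_nat_le_iff of_nat_power)
  moreover have pos: "real n ^ 8 > 0" using assms(1) by simp
  ultimately have "ln (real n ^ 8) \<le> ln (real j)" using ln_le_cancel_iff by (metis less_le_trans)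
  then show "8 * ln (real n) \<le> ln (real j)" using assms(1) by (simp add: ln_realpow)
  then show "ln (real j) > 0" using ln_n_pos[OF assms(1)] by linarith
qed

lemma wpot_nonneg: "n \<ge> 2 \<Longrightarrow> 0 \<le> wpot n j"
proof -
  assume n: "n \<ge> 2"
  show ?thesis
  proof (cases "j < n^8")
    case False
    then have "0 < j" using n by (metis le_less_trans not_less zero_less_numeral zero_less_power)
    then show ?thesis using False ln_big[OF n, of j] n unfolding wpot_def
      by (auto intro!: divide_nonneg_pos mult_pos_pos)
  qed (simp add: wpot_def)
qed

lemma wpot_le_inv: assumes "n \<ge> 2" "j \<ge> 1" shows "wpot n j \<le> 1 / real j"
proof (cases "j < n^8")
  case False
  then have h: "8 * ln (real n) \<le> ln (real j)" "ln (real j) > 0" using ln_big[OF assms(1)] by auto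
  have "8 * ln (real n) / (real j * ln (real j)) \<le> ln (real j) / (real j * ln (real j))"
    using h assms(2) by (intro divide_right_mono) auto
  also have "\<dots> = 1 / real j" using h by simp
  finally show ?thesis using False by (simp add: wpot_def)
qed (simp add: wpot_def)

lemma wpot_anti: assumes "n \<ge> 2" "1 \<le> j" "j \<le> f" shows "wpot n f \<le> wpot n j"
proof (cases "f < n^8")
  case True
  then have "j < n^8" using assms by linarith
  then show ?thesis using True assms by (simp add: wpot_def frac_le)
next
  case False
  note hf = ln_big[OF assms(1), of f]
  show ?thesis
  proof (cases "j < n^8")
    case True
    have "wpot n f \<le> 1 / real f" using wpot_le_inv assms by simp
    also have "\<dots> \<le> 1 / real j" using assms by (simp add: frac_le)
    finally show ?thesis using True by (simp add: wpot_def)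
  next
    case F2: False
    note hj = ln_big[OF assms(1), of j]
    have "real j * ln (real j) \<le> real f * ln (real f)"
      using hj F2 assms by (intro mult_mono) auto
    moreover have "real j * ln (real j) > 0" using hj F2 assms by simp
    moreover have "8 * ln (real n) \<ge> 0" using assms by simp
    ultimately show ?thesis using False F2 by (simp add: wpot_def frac_le)
  qed
qed

lemma Vpot_Suc: "Vpot n (Suc m) = Vpot n m + wpot n (Suc m)"
  unfolding Vpot_def by (simp add: sum.cl_ivl_Suc)

lemma Vpot_mono: assumes "n \<ge> 2" "f1 \<le> f2" shows "Vpot n f1 \<le> Vpot n f2"
  unfolding Vpot_def using assms wpot_nonneg by (intro sum_mono2) auto

lemma Vpot_diff: assumes "n \<ge> 2" "d \<le> f" shows "real d * wpot n f \<le> Vpot n f - Vpot n (f - d)"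
  using assms(2)
proof (induction d)
  case 0 then show ?case by simp
next
  case (Suc d)
  have eq: "f - d = Suc (f - Suc d)" using Suc.prems by simp
  have "Vpot n (f - d) = Vpot n (f - Suc d) + wpot n (f - d)" by (subst eq, subst Vpot_Suc) (simp add: eq)
  moreover have "wpot n f \<le> wpot n (f - d)" using wpot_anti[OF assms(1)] Suc.prems by simp
  moreover have "real d * wpot n f \<le> Vpot n f - Vpot n (f - d)" using Suc by simp
  ultimately show ?case by (simp add: algebra_simps)
qed

lemma cosize_big:
  assumes n: "n \<ge> 2" and FP: "FP \<subseteq> {S. S \<subseteq> {1..n}}" and f: "n^8 \<le> card FP"
  shows "real (card FP) * ln (real (card FP)) / (8 * ln (real n)) \<le> real (\<Sum>S\<in>FP. n - card S)"
proof -
  define f where "f = card FP"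
  define L where "L = ln (real n)"
  have L: "L > 0" using n by (simp add: L_def)
  have lf: "8 * L \<le> ln (real f)" "ln (real f) > 0" using ln_big[OF n, of f] f by (auto simp: L_def f_def)
  define x where "x = ln (real f) / L"
  have x8: "x \<ge> 8" using lf L by (simp add: x_def field_simps)
  define m where "m = nat \<lfloor>x\<rfloor>"
  have mx: "real m \<le> x" "x < real m + 1" using x8 by (simp_all add: m_def)
  have m8: "m \<ge> 8" using x8 by (simp add: m_def) linarith
  have h0: "0 < n^8" using n by simp
  have "0 < card FP" using h0 f by linarith
  then have fpos: "real f > 0" by (simp add: f_def)
  have "ln (real n ^ m) = real m * L" using n by (simp add: ln_realpow L_def)
  also have "\<dots> \<le> x * L" using mx L by simp
  also have "\<dots> = ln (real f)" using L by (simp add: x_def)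
  finally have "real n ^ m \<le> real f" using n fpos by simp
  then have nm: "n ^ m \<le> f" by (metis of_nat_le_iff of_nat_power)
  define k where "k = m - 1"
  have "2 * n^k \<le> n * n^k" using n by simp
  also have "\<dots> = n^m" using m8 by (simp add: k_def power_Suc[symmetric])
  finally have "2 * n^k \<le> card FP" using nm by (simp add: f_def)
  from sum_cosize_lb[OF n FP this]
  have "real k * real f \<le> 2 * real (\<Sum>S\<in>FP. n - card S)" unfolding f_def by (metis of_nat_le_iff of_nat_mult of_nat_numeral)
  moreover have "real k \<ge> x - 2" using mx m8 by (simp add: k_def)
  moreover have "x / 4 \<le> x - 2" using x8 by simp
  ultimately have "x / 4 * real f \<le> 2 * real (\<Sum>S\<in>FP. n - card S)"
    by (smt (verit) fpos mult_right_mono)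
  then have "x * real f / 8 \<le> real (\<Sum>S\<in>FP. n - card S)" by simp
  moreover have "x * real f / 8 = real f * ln (real f) / (8 * L)" by (simp add: x_def mult.commute)
  ultimately show ?thesis by (simp only: f_def L_def)
qed

lemma wpot_times_sum:
  assumes n: "n \<ge> 2" and FP: "FP \<subseteq> {S. S \<subseteq> {1..n} \<and> S \<noteq> {1..n}}" and f: "card FP \<ge> 1"
  shows "1 \<le> wpot n (card FP) * real (\<Sum>S\<in>FP. n - card S)"
proof (cases "card FP < n^8")
  case True
  have "real (card FP) \<le> real (\<Sum>S\<in>FP. n - card S)" using sum_cosize_ge_card[OF FP] by (simp only: of_nat_le_iff)
  then show ?thesis using True f by (simp add: wpot_def field_simps)
next
  case False
  have FP': "FP \<subseteq> {S. S \<subseteq> {1..n}}" using FP by auto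
  have h: "real (card FP) * ln (real (card FP)) / (8 * ln (real n)) \<le> real (\<Sum>S\<in>FP. n - card S)"
    using cosize_big[OF n FP'] False by simp
  have lp: "ln (real (card FP)) > 0" "ln (real n) > 0" using ln_big[OF n, of "card FP"] False n by auto
  have "1 = 8 * ln (real n) / (real (card FP) * ln (real (card FP))) *
      (real (card FP) * ln (real (card FP)) / (8 * ln (real n)))" using lp f by (simp add: field_simps)
  also have "\<dots> \<le> 8 * ln (real n) / (real (card FP) * ln (real (card FP))) * real (\<Sum>S\<in>FP. n - card S)"
    using h lp f by (intro mult_left_mono) auto
  finally show ?thesis using False by (simp add: wpot_def)
qed

lemma harm_bound: "N \<ge> 1 \<Longrightarrow> (\<Sum>j\<in>{1..N}. 1 / real j) \<le> 1 + ln (real N)"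
proof (induction N rule: dec_induct)
  case base then show ?case by simp
next
  case (step N)
  have N: "real N \<ge> 1" using step by simp
  have "ln (real N / real (Suc N)) \<le> real N / real (Suc N) - 1" by (rule ln_le_minus_one) (use N in simp)
  then have "1 / real (Suc N) \<le> ln (real (Suc N)) - ln (real N)"
    using N by (simp add: ln_div field_simps)
  then show ?case using step by (simp add: sum.cl_ivl_Suc)
qed

lemma loglog_step: assumes "N \<ge> 2"
  shows "1 / (real (Suc N) * ln (real (Suc N))) \<le> ln (ln (real (Suc N))) - ln (ln (real N))"
proof -
  define a where "a = ln (real N)"
  define b where "b = ln (real (Suc N))"
  have a: "a > 0" using assms by (simp add: a_def)
  have ab: "a < b" using assms by (simp add: a_def b_def)
  have N: "real N \<ge> 1" using assms by simp
  have "ln (real N / real (Suc N)) \<le> real N / real (Suc N) - 1" by (rule ln_le_minus_one) (use N in simp)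
  then have h1: "1 / real (Suc N) \<le> b - a"
    using N by (simp add: ln_div field_simps a_def b_def)
  have "ln (a / b) \<le> a / b - 1" by (rule ln_le_minus_one) (use a ab in simp)
  then have h2: "(b - a) / b \<le> ln b - ln a" using a ab by (simp add: ln_div field_simps)
  have "1 / (real (Suc N) * b) = (1 / real (Suc N)) / b" by simp
  also have "\<dots> \<le> (b - a) / b" using h1 a ab by (intro divide_right_mono) auto
  finally show ?thesis using h2 by (simp add: a_def b_def)
qed

lemma Vpot_big:
  assumes n: "n \<ge> 2" and N: "n^8 \<le> N"
  shows "Vpot n N \<le> 1 + 8 * ln (real n) + 8 * ln (real n) * (ln (ln (real N)) - ln (ln (real (n^8))))"
  using N
proof (induction N rule: dec_induct)
  case base
  have "Vpot n (n^8) \<le> (\<Sum>j\<in>{1..n^8}. 1 / real j)"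
    unfolding Vpot_def by (rule sum_mono) (use wpot_le_inv[OF n] in auto)
  also have "\<dots> \<le> 1 + ln (real (n^8))" by (rule harm_bound) (use n in simp)
  also have "ln (real (n^8)) = 8 * ln (real n)" using n by (simp add: ln_realpow)
  finally show ?case by simp
next
  case (step N)
  have "n \<le> n^8" using n by (simp add: self_le_power)
  then have N2: "N \<ge> 2" using step n by linarith
  have "wpot n (Suc N) = 8 * ln (real n) * (1 / (real (Suc N) * ln (real (Suc N))))"
    using step by (simp add: wpot_def)
  also have "\<dots> \<le> 8 * ln (real n) * (ln (ln (real (Suc N))) - ln (ln (real N)))"
    using loglog_step[OF N2] n by (intro mult_left_mono) auto
  finally show ?case using step by (simp add: Vpot_Suc algebra_simps)
qed

lemma Vpot_bound:
  assumes n: "n \<ge> 2"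
  shows "Vpot n (2^n) \<le> 1 + 8 * ln (real n) + 8 * (ln (real n))^2"
proof -
  define L where "L = ln (real n)"
  have L: "L > 0" using n by (simp add: L_def)
  define N where "N = max (2^n) (n^8)"
  have "Vpot n (2^n) \<le> Vpot n N" using Vpot_mono[OF n] by (simp add: N_def)
  also have "\<dots> \<le> 1 + 8 * L + 8 * L * (ln (ln (real N)) - ln (ln (real (n^8))))"
    using Vpot_big[OF n, of N] by (simp add: N_def L_def)
  also have "\<dots> \<le> 1 + 8 * L + 8 * L * L"
  proof -
    have l8: "ln (real (n^8)) = 8 * L" using n by (simp add: ln_realpow L_def)
    have "ln 2 > (0.5::real)" using ln2_ge_two_thirds by linarith
    moreover have "ln 2 \<le> L" using n by (simp add: L_def)
    ultimately have "8 * L \<ge> 1" by linarith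
    then have a: "ln (ln (real (n^8))) \<ge> 0" using l8 by simp
    have "ln (ln (real N)) - ln (ln (real (n^8))) \<le> L"
    proof (cases "2^n \<le> n^8")
      case True
      then show ?thesis using L by (simp add: N_def max_def)
    next
      case False
      then have "real N = 2 ^ n" by (simp add: N_def max_def)
      then have "ln (real N) = real n * ln 2" by (simp add: ln_realpow)
      then have "ln (ln (real N)) = L + ln (ln 2)" using n by (simp add: ln_mult L_def)
      moreover have "ln (ln (2::real)) \<le> 0" using ln_2_less_1 by simp
      ultimately show ?thesis using a by linarith
    qed
    then show ?thesis using a L by (smt (verit) mult_left_mono)
  qed
  finally show ?thesis by (simp add: L_def power2_eq_square)
qed

definition FPw :: "nat \<Rightarrow> gptree \<Rightarrow> nat set set" where
  "FPw n X = {S. S \<subseteq> {1..n} \<and> S \<noteq> {1..n} \<and> eval_tree X S}"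

lemma FPw_sub: "FPw n X \<subseteq> {S. S \<subseteq> {1..n} \<and> S \<noteq> {1..n}}" by (auto simp: FPw_def)

lemma fitness_wft: assumes "wft n X" shows "fitness n X = card (FPw n X)"
proof -
  have "X \<noteq> GEmpty" using assms by auto
  moreover have "{S. S \<subseteq> {1..n} \<and> eval_tree X S \<noteq> (S = {1..n})} = FPw n X"
    using wft_eval_full'[OF assms] by (auto simp: FPw_def)
  ultimately show ?thesis by (simp add: fitness_def)
qed

lemma fitness_lt: assumes "wft n X" shows "fitness n X < 2^n"
proof -
  have "FPw n X \<subseteq> Pow {1..n} - {{1..n}}" by (auto simp: FPw_def)
  then have "card (FPw n X) \<le> card (Pow {1..n} - {{1..n}})" by (intro card_mono) auto
  also have "\<dots> = 2^n - 1" by (simp add: card_Pow)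
  moreover have "(0::nat) < 2^n" by simp
  ultimately show ?thesis using fitness_wft[OF assms] by linarith
qed

lemma fitness_le: "fitness n X \<le> 2^n"
proof -
  have "{S. S \<subseteq> {1..n} \<and> eval_tree X S \<noteq> (S = {1..n})} \<subseteq> Pow {1..n}" by auto
  then have "card {S. S \<subseteq> {1..n} \<and> eval_tree X S \<noteq> (S = {1..n})} \<le> card (Pow {1..n})"
    by (intro card_mono) auto
  then show ?thesis by (simp add: fitness_def card_Pow)
qed

definition phi :: "nat \<Rightarrow> gptree \<Rightarrow> real" where
  "phi n X = (if fitness n X < 2^n then Vpot n (fitness n X) else Vpot n (2^n) + 1)"

lemma Vpot_nonneg: "n \<ge> 2 \<Longrightarrow> 0 \<le> Vpot n f"
  unfolding Vpot_def using wpot_nonneg by (simp add: sum_nonneg)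

lemma phi_mono: assumes "n \<ge> 2" "fitness n Y \<le> fitness n X" shows "phi n Y \<le> phi n X"
  using assms Vpot_mono[OF assms(1), of "fitness n Y" "fitness n X"]
    Vpot_mono[OF assms(1), of "fitness n Y" "2^n"] by (auto simp: phi_def)

lemma phi_bounds: assumes "n \<ge> 2" shows "0 \<le> phi n X" "phi n X \<le> Vpot n (2^n) + 1"
  using assms Vpot_nonneg[OF assms] Vpot_mono[OF assms(1), of "fitness n X" "2^n"] by (auto simp: phi_def)

lemma phi_integrable: assumes "n \<ge> 2" shows "integrable (measure_pmf p) (phi n)"
  by (rule measure_pmf.integrable_const_bound[where B="Vpot n (2^n) + 1"])
     (use phi_bounds[OF assms] in auto)

lemma wft_counts: "wft n t \<Longrightarrow> node_count t + 1 = 2 * leaf_count t \<and> leaf_count t \<ge> 1"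
  by (induction t) auto

lemma bind_ge:
  assumes "finite A" "a \<in> A" "c \<le> pmf (f a) y"
  shows "c / real (card A) \<le> pmf (bind_pmf (pmf_of_set A) f) y"
proof -
  have ne: "A \<noteq> {}" using assms by auto
  have "pmf (bind_pmf (pmf_of_set A) f) y = (\<Sum>x\<in>A. pmf (f x) y) / real (card A)"
    using ne assms(1) by (simp add: pmf_bind integral_pmf_of_set)
  moreover have "pmf (f a) y \<le> (\<Sum>x\<in>A. pmf (f x) y)"
    by (rule member_le_sum) (use assms in \<open>auto simp: pmf_nonneg\<close>)
  ultimately show ?thesis using assms by (simp add: divide_right_mono)
qed

definition Yl :: "gptree \<Rightarrow> nat \<Rightarrow> gptree" where
  "Yl X l = GNode FAnd X (GLeaf l)"

lemma pmf_hvl_Yl: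
  assumes w: "wft n X" and l: "l \<in> {1..n}"
  shows "1 / (12 * real n * real (node_count X)) \<le> pmf (hvl_prime n X) (Yl X l)"
proof -
  have ne: "X \<noteq> GEmpty" using w by auto
  have nc: "node_count X > 0" using wft_counts[OF w] by simp
  have "((((1 / real (card (UNIV::bool set))) / real (card {..<node_count X})) / real (card {FAnd, FOr}))
          / real (card {1..n})) / real (card {INS, DEL, SUB}) \<le> pmf (hvl_prime n X) (Yl X l)"
    unfolding hvl_prime_def
    apply (rule bind_ge[where a=INS], simp, simp)
    apply (rule bind_ge[where a=l], simp, use l in simp)
    apply (rule bind_ge[where a=FAnd], simp, simp)
    apply (simp only: ne if_False hvl_op.case)
    apply (rule bind_ge[where a=0], simp, use nc in simp)
    apply (rule bind_ge[where a=True], simp, simp)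
    apply (simp add: Yl_def)
    done
  moreover have "((((1 / real (card (UNIV::bool set))) / real (card {..<node_count X})) / real (card {FAnd, FOr}))
          / real (card {1..n})) / real (card {INS, DEL, SUB}) = 1 / (12 * real n * real (node_count X))"
    by (simp add: field_simps)
  ultimately show ?thesis by (simp add: ac_simps)
qed

lemma wft_Yl: "wft n X \<Longrightarrow> l \<in> {1..n} \<Longrightarrow> wft n (Yl X l)" by (simp add: Yl_def)

lemma FPw_Yl: "FPw n (Yl X l) = {S\<in>FPw n X. l \<in> S}"
  by (auto simp: FPw_def Yl_def)

lemma fitness_split:
  assumes w: "wft n X" and l: "l \<in> {1..n}"
  shows "fitness n X = fitness n (Yl X l) + card {S\<in>FPw n X. l \<notin> S}"
proof -
  have fin: "finite (FPw n X)" by (rule finite_subset[OF FPw_sub]) simp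
  have "FPw n X = {S\<in>FPw n X. l \<in> S} \<union> {S\<in>FPw n X. l \<notin> S}" by auto
  then have "card (FPw n X) = card {S\<in>FPw n X. l \<in> S} + card {S\<in>FPw n X. l \<notin> S}"
    using fin by (metis (no_types, lifting) card_Un_disjoint disjoint_iff finite_Un mem_Collect_eq)
  then show ?thesis using fitness_wft[OF w] fitness_wft[OF wft_Yl[OF w l]] by (simp add: FPw_Yl)
qed

lemma step_phi_le:
  assumes n: "n \<ge> 2" and Y: "Y \<in> set_pmf (rls_step n ell X)"
  shows "phi n Y \<le> phi n X"
  using Y phi_mono[OF n] by (auto simp: rls_step_def split: if_splits)

lemma pmf_step_Yl:
  assumes w: "wft n X" and l: "l \<in> {1..n}" and lc: "leaf_count X < ell"
  shows "pmf (hvl_prime n X) (Yl X l) \<le> pmf (rls_step n ell X) (Yl X l)"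
proof -
  define acc where "acc = (\<lambda>X'. if leaf_count X' \<le> ell \<and> fitness n X' \<le> fitness n X then X' else X)"
  have "acc (Yl X l) = Yl X l"
    using lc fitness_split[OF w l] by (simp add: acc_def Yl_def)
  then have "{Yl X l} \<subseteq> acc -` {Yl X l}" by auto
  then have "measure (measure_pmf (hvl_prime n X)) {Yl X l} \<le> measure (measure_pmf (hvl_prime n X)) (acc -` {Yl X l})"
    by (rule measure_pmf.finite_measure_mono) simp
  then show ?thesis by (simp add: rls_step_def acc_def[symmetric] pmf_map measure_pmf_single)
qed

lemma drift_nonempty:
  assumes n: "n \<ge> 2" and w: "wft n X" and f0: "fitness n X \<noteq> 0" and lc: "leaf_count X < ell"
  shows "(\<integral>Y. phi n Y \<partial>measure_pmf (rls_step n ell X)) \<le> phi n X - 1 / (24 * real n * real ell)"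
proof -
  define \<mu> where "\<mu> = rls_step n ell X"
  define f where "f = fitness n X"
  define c where "c = 1 / (24 * real n * real ell)"
  define d where "d l = card {S\<in>FPw n X. l \<notin> S}" for l
  define Ys where "Ys = Yl X ` {1..n}"
  define g where "g Y = (if Y \<in> Ys then phi n X - phi n Y else 0)" for Y
  have B: "\<bar>phi n Y\<bar> \<le> Vpot n (2^n) + 1" for Y using phi_bounds[OF n, of Y] by simp
  have ell: "ell \<ge> 1" using lc by simp
  have phiX: "phi n X = Vpot n f" using fitness_lt[OF w] by (simp add: phi_def f_def)
  have split: "f = fitness n (Yl X l) + d l" if "l \<in> {1..n}" for l
    using fitness_split[OF w that] by (simp add: f_def d_def)
  have phiY: "phi n (Yl X l) = Vpot n (f - d l)" if "l \<in> {1..n}" for l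
    using fitness_lt[OF wft_Yl[OF w that]] split[OF that] by (simp add: phi_def)
  have intD: "(\<integral>Y. phi n X - phi n Y \<partial>measure_pmf \<mu>) = phi n X - (\<integral>Y. phi n Y \<partial>measure_pmf \<mu>)"
    using phi_integrable[OF n] by (simp add: Bochner_Integration.integral_diff)
  have gb: "norm (g Y) \<le> 2 * (Vpot n (2^n) + 1)" for Y
  proof -
    have "0 \<le> phi n X" "phi n X \<le> Vpot n (2^n) + 1" "0 \<le> phi n Y" "phi n Y \<le> Vpot n (2^n) + 1"
      using phi_bounds[OF n] by auto
    then show ?thesis unfolding g_def by auto
  qed
  have ig: "integrable (measure_pmf \<mu>) g"
    by (rule measure_pmf.integrable_const_bound[where B="2 * (Vpot n (2^n) + 1)"]) (use gb in auto)
  have "(\<integral>Y. g Y \<partial>measure_pmf \<mu>) \<le> (\<integral>Y. phi n X - phi n Y \<partial>measure_pmf \<mu>)"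
  proof (rule integral_mono_AE[OF ig])
    show "integrable (measure_pmf \<mu>) (\<lambda>Y. phi n X - phi n Y)"
      using phi_integrable[OF n] by simp
    show "AE Y in measure_pmf \<mu>. g Y \<le> phi n X - phi n Y"
      using step_phi_le[OF n] by (auto simp: AE_measure_pmf_iff g_def \<mu>_def)
  qed
  moreover have "(\<integral>Y. g Y \<partial>measure_pmf \<mu>) = (\<Sum>Y\<in>Ys. g Y * pmf \<mu> Y)"
    by (rule integral_measure_pmf_real) (auto simp: g_def Ys_def split: if_splits)
  moreover have "(\<Sum>Y\<in>Ys. g Y * pmf \<mu> Y) = (\<Sum>l\<in>{1..n}. (phi n X - phi n (Yl X l)) * pmf \<mu> (Yl X l))"
  proof -
    have "inj_on (Yl X) {1..n}" by (auto simp: inj_on_def Yl_def)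
    then show ?thesis by (simp add: Ys_def g_def sum.reindex)
  qed
  moreover have "(\<Sum>l\<in>{1..n}. (real (d l) * wpot n f) * c) \<le> (\<Sum>l\<in>{1..n}. (phi n X - phi n (Yl X l)) * pmf \<mu> (Yl X l))"
  proof (rule sum_mono)
    fix l assume l: "l \<in> {1..n}"
    have "d l \<le> f" using split[OF l] by simp
    then have a: "real (d l) * wpot n f \<le> phi n X - phi n (Yl X l)"
      using Vpot_diff[OF n] phiX phiY[OF l] by simp
    have nc: "node_count X + 1 = 2 * leaf_count X" using wft_counts[OF w] by simp
    have ncp: "node_count X > 0" using wft_counts[OF w] by simp
    have "real (node_count X) \<le> 2 * real ell" using nc lc by linarith
    then have "12 * real n * real (node_count X) \<le> 12 * real n * (2 * real ell)"
      by (intro mult_left_mono) auto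
    then have "12 * real n * real (node_count X) \<le> 24 * real n * real ell" by simp
    then have "c \<le> 1 / (12 * real n * real (node_count X))"
      unfolding c_def using n ncp by (intro divide_left_mono) auto
    also have "\<dots> \<le> pmf \<mu> (Yl X l)"
      using pmf_hvl_Yl[OF w l] pmf_step_Yl[OF w l lc] by (simp add: \<mu>_def)
    finally have b: "c \<le> pmf \<mu> (Yl X l)" .
    have "0 \<le> real (d l) * wpot n f" using wpot_nonneg[OF n] by simp
    moreover have "0 \<le> c" using c_def by simp
    ultimately show "real (d l) * wpot n f * c \<le> (phi n X - phi n (Yl X l)) * pmf \<mu> (Yl X l)"
      using a b by (intro mult_mono) auto
  qed
  moreover have "c \<le> (\<Sum>l\<in>{1..n}. (real (d l) * wpot n f) * c)"
  proof -
    have dc: "(\<Sum>l\<in>{1..n}. d l) = (\<Sum>S\<in>FPw n X. n - card S)"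
      unfolding d_def by (rule double_count) (use FPw_sub in blast)
    have "card (FPw n X) \<ge> 1" using f0 fitness_wft[OF w] by simp
    then have "1 \<le> wpot n f * real (\<Sum>S\<in>FPw n X. n - card S)"
      using wpot_times_sum[OF n FPw_sub] fitness_wft[OF w] by (simp add: f_def)
    also have "\<dots> = (\<Sum>l\<in>{1..n}. real (d l) * wpot n f)"
      by (simp only: dc[symmetric] of_nat_sum sum_distrib_left mult.commute)
    finally have "1 * c \<le> (\<Sum>l\<in>{1..n}. real (d l) * wpot n f) * c"
      by (intro mult_right_mono) (auto simp: c_def)
    then show ?thesis by (simp add: sum_distrib_right)
  qed
  ultimately have "c \<le> phi n X - (\<integral>Y. phi n Y \<partial>measure_pmf \<mu>)" using intD by linarith
  then show ?thesis by (simp add: c_def \<mu>_def)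
qed

lemma int_le_const:
  assumes n: "n \<ge> 2" and "\<And>Y. Y \<in> set_pmf p \<Longrightarrow> phi n Y \<le> a"
  shows "(\<integral>Y. phi n Y \<partial>measure_pmf p) \<le> a"
proof -
  have "(\<integral>Y. phi n Y \<partial>measure_pmf p) \<le> (\<integral>Y. a \<partial>measure_pmf p)"
    by (rule integral_mono_AE[OF phi_integrable[OF n]]) (use assms in \<open>auto simp: AE_measure_pmf_iff\<close>)
  then show ?thesis by simp
qed

lemma hvl_empty_support:
  assumes "n \<ge> 1" "Y \<in> set_pmf (hvl_prime n GEmpty)"
  shows "\<exists>l\<in>{1..n}. Y = GLeaf l"
proof -
  have fin: "finite {1..n}" "{1..n} \<noteq> {}" using assms(1) by auto
  show ?thesis using assms(2) fin unfolding hvl_prime_def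
    by (simp only: set_bind_pmf set_pmf_of_set) (auto simp: set_pmf_of_set)
qed

lemma drift_empty:
  assumes n: "n \<ge> 2" and ell: "ell \<ge> 1"
  shows "(\<integral>Y. phi n Y \<partial>measure_pmf (rls_step n ell GEmpty)) \<le> phi n GEmpty - 1"
proof -
  have pe: "phi n GEmpty = Vpot n (2^n) + 1" by (simp add: phi_def fitness_def)
  have "phi n Y \<le> Vpot n (2^n)" if Y: "Y \<in> set_pmf (rls_step n ell GEmpty)" for Y
  proof -
    obtain Y' where Y': "Y' \<in> set_pmf (hvl_prime n GEmpty)"
      and YY: "Y = (if leaf_count Y' \<le> ell \<and> fitness n Y' \<le> fitness n GEmpty then Y' else GEmpty)"
      using Y by (auto simp: rls_step_def)
    obtain l where l: "l \<in> {1..n}" "Y' = GLeaf l" using hvl_empty_support[OF _ Y'] n by auto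
    have "fitness n Y' \<le> fitness n GEmpty" using fitness_le[of n Y'] by (simp add: fitness_def)
    then have "Y = GLeaf l" using YY l ell by simp
    moreover have "wft n (GLeaf l)" using l by simp
    ultimately have "fitness n Y < 2^n" using fitness_lt by blast
    then show ?thesis using Vpot_mono[OF n, of "fitness n Y" "2^n"] by (simp add: phi_def)
  qed
  then show ?thesis using int_le_const[OF n] pe by fastforce
qed

definition Aset :: "nat \<Rightarrow> nat \<Rightarrow> gptree set" where
  "Aset n ell = {X. fitness n X \<noteq> 0 \<and> leaf_count X < ell}"

lemma step_real:
  assumes n: "n \<ge> 2" and ell: "ell \<ge> 1" and X: "inv_t n X"
  shows "(\<integral>Y. phi n Y \<partial>measure_pmf (rls_step n ell X)) + 1 / (24 * real n * real ell) * indicator (Aset n ell) X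
     \<le> phi n X"
proof (cases "X \<in> Aset n ell")
  case True
  have "1 \<le> real n" "1 \<le> real ell" using n ell by auto
  then have "1 \<le> 24 * real n * real ell" by (metis mult_ge1_I le_trans mult_left_mono[of 1 "real n" 24] mult.right_neutral
     zero_le_numeral one_le_numeral)
  then have c1: "1 / (24 * real n * real ell) \<le> 1" by (metis divide_le_eq_1 less_eq_real_def zero_less_one less_le_trans)
  show ?thesis
  proof (cases "X = GEmpty")
    case True
    then show ?thesis using drift_empty[OF n ell] c1 \<open>X \<in> Aset n ell\<close> by simp
  next
    case False
    then have "wft n X" using X by (simp add: inv_t_def)
    moreover have "fitness n X \<noteq> 0" "leaf_count X < ell" using True by (auto simp: Aset_def)
    ultimately have "(\<integral>Y. phi n Y \<partial>measure_pmf (rls_step n ell X)) \<le> phi n X - 1 / (24 * real n * real ell)"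
      using drift_nonempty[OF n] by blast
    then show ?thesis using True by simp
  qed
next
  case False
  have "(\<integral>Y. phi n Y \<partial>measure_pmf (rls_step n ell X)) \<le> phi n X"
    by (rule int_le_const[OF n]) (rule step_phi_le[OF n])
  then show ?thesis using False by simp
qed

lemma step_nn:
  assumes n: "n \<ge> 2" and ell: "ell \<ge> 1" and X: "inv_t n X"
  shows "(\<integral>\<^sup>+Y. ennreal (phi n Y) \<partial>measure_pmf (rls_step n ell X))
      + ennreal (1 / (24 * real n * real ell)) * indicator (Aset n ell) X \<le> ennreal (phi n X)"
proof -
  let ?c = "1 / (24 * real n * real ell)"
  let ?I = "\<integral>Y. phi n Y \<partial>measure_pmf (rls_step n ell X)"
  have nn: "(\<integral>\<^sup>+Y. ennreal (phi n Y) \<partial>measure_pmf (rls_step n ell X)) = ennreal ?I"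
    by (rule nn_integral_eq_integral[OF phi_integrable[OF n]]) (use phi_bounds[OF n] in auto)
  have I0: "0 \<le> ?I" using phi_bounds[OF n] by (simp add: integral_nonneg)
  have c0: "0 \<le> ?c" by simp
  have "ennreal ?I + ennreal ?c * indicator (Aset n ell) X = ennreal (?I + ?c * indicator (Aset n ell) X)"
    using I0 c0 by (cases "X \<in> Aset n ell") (simp_all add: ennreal_plus)
  also have "\<dots> \<le> ennreal (phi n X)" using step_real[OF n ell X] by (rule ennreal_leI)
  finally show ?thesis using nn by simp
qed

lemma accum:
  assumes n: "n \<ge> 2" and ell: "ell \<ge> 1"
  shows "(\<integral>\<^sup>+Y. ennreal (phi n Y) \<partial>measure_pmf (rls_state n ell t))
    + ennreal (1 / (24 * real n * real ell)) * (\<Sum>s<t. emeasure (measure_pmf (rls_state n ell s)) (Aset n ell))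
    \<le> ennreal (phi n GEmpty)"
proof (induction t)
  case 0 then show ?case by simp
next
  case (Suc t)
  let ?c = "ennreal (1 / (24 * real n * real ell))"
  let ?M = "measure_pmf (rls_state n ell t)"
  let ?F = "\<lambda>X. \<integral>\<^sup>+Y. ennreal (phi n Y) \<partial>measure_pmf (rls_step n ell X)"
  have e1: "(\<integral>\<^sup>+Y. ennreal (phi n Y) \<partial>measure_pmf (rls_state n ell (Suc t))) = (\<integral>\<^sup>+X. ?F X \<partial>?M)"
    by simp
  have e2: "(\<integral>\<^sup>+X. ?F X \<partial>?M) + ?c * emeasure ?M (Aset n ell) = (\<integral>\<^sup>+X. ?F X + ?c * indicator (Aset n ell) X \<partial>?M)"
    by (subst nn_integral_add) (auto simp: nn_integral_cmult_indicator)
  have e3: "(\<integral>\<^sup>+X. ?F X + ?c * indicator (Aset n ell) X \<partial>?M) \<le> (\<integral>\<^sup>+X. ennreal (phi n X) \<partial>?M)"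
    by (rule nn_integral_mono_AE)
       (use step_nn[OF n ell] state_support[of n _ ell t] n in \<open>auto simp: AE_measure_pmf_iff\<close>)
  have "(\<integral>\<^sup>+Y. ennreal (phi n Y) \<partial>measure_pmf (rls_state n ell (Suc t)))
    + ?c * (\<Sum>s<Suc t. emeasure (measure_pmf (rls_state n ell s)) (Aset n ell))
    = ((\<integral>\<^sup>+X. ?F X \<partial>?M) + ?c * emeasure ?M (Aset n ell))
      + ?c * (\<Sum>s<t. emeasure (measure_pmf (rls_state n ell s)) (Aset n ell))"
    by (simp only: e1 sum.lessThan_Suc distrib_left ac_simps)
  also have "\<dots> \<le> (\<integral>\<^sup>+X. ennreal (phi n X) \<partial>?M)
      + ?c * (\<Sum>s<t. emeasure (measure_pmf (rls_state n ell s)) (Aset n ell))"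
    using e2 e3 by (intro add_right_mono) simp
  also have "\<dots> \<le> ennreal (phi n GEmpty)" using Suc .
  finally show ?case .
qed

lemma partial_bound:
  assumes n: "n \<ge> 2" and ell: "ell \<ge> 1"
  shows "(\<Sum>s<t. measure_pmf.prob (rls_state n ell s) (Aset n ell))
     \<le> phi n GEmpty * (24 * real n * real ell)"
proof -
  let ?c = "1 / (24 * real n * real ell)"
  let ?S = "\<Sum>s<t. measure_pmf.prob (rls_state n ell s) (Aset n ell)"
  have cpos: "?c > 0" using n ell by simp
  have "(\<Sum>s<t. emeasure (measure_pmf (rls_state n ell s)) (Aset n ell)) = ennreal ?S"
    by (simp add: measure_pmf.emeasure_eq_measure)
  moreover have "ennreal ?c * (\<Sum>s<t. emeasure (measure_pmf (rls_state n ell s)) (Aset n ell)) \<le> ennreal (phi n GEmpty)"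
    by (rule order.trans[OF _ accum[OF n ell, of t]]) (rule add_increasing, simp_all)
  ultimately have "ennreal ?c * ennreal ?S \<le> ennreal (phi n GEmpty)" by simp
  moreover have "ennreal ?c * ennreal ?S = ennreal (?c * ?S)"
    by (rule ennreal_mult[symmetric]) (simp, simp add: sum_nonneg)
  ultimately have "ennreal (?c * ?S) \<le> ennreal (phi n GEmpty)" by simp
  moreover have "0 \<le> phi n GEmpty" using phi_bounds[OF n] by simp
  ultimately have "?c * ?S \<le> phi n GEmpty" by (simp add: ennreal_le_iff)
  then show ?thesis using cpos n ell by (simp add: field_simps)
qed

theorem lemma5:
  shows "\<exists>C::real. C > 0 \<and> (\<exists>N::nat. \<forall>n \<ge> N. \<forall>ell \<ge> n.
           expected_T0 n ell \<le> ennreal (C * real ell * real n * (ln (real n))\<^sup>2))"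
proof (intro exI conjI allI impI)
  show "(432::real) > 0" by simp
  fix n ell :: nat assume n3: "n \<ge> 3" and elln: "ell \<ge> n"
  have n: "n \<ge> 2" using n3 by simp
  have ell: "ell \<ge> 1" using n3 elln by simp
  define L where "L = ln (real n)"
  have "1 \<le> ln (3::real)" using exp_le by (subst ln_ge_iff) auto
  moreover have "ln (3::real) \<le> L" using n3 by (simp add: L_def)
  ultimately have L1: "1 \<le> L" by simp
  have "phi n GEmpty = Vpot n (2^n) + 1" by (simp add: phi_def fitness_def)
  also have "\<dots> \<le> 2 + 8 * L + 8 * L^2" using Vpot_bound[OF n] by (simp add: L_def)
  also have "\<dots> \<le> 18 * L^2"
  proof -
    have a: "L \<le> L * L" using L1 mult_left_mono[of 1 L L] by simp
    show ?thesis unfolding power2_eq_square using L1 a by linarith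
  qed
  finally have p0: "phi n GEmpty \<le> 18 * L^2" .
  have pos: "0 \<le> 24 * real n * real ell" by simp
  have B: "phi n GEmpty * (24 * real n * real ell) \<le> 432 * real ell * real n * L^2"
    using mult_right_mono[OF p0 pos] by (simp add: algebra_simps)
  have "expected_T0 n ell = (\<Sum>t. ennreal (measure_pmf.prob (rls_state n ell t) (Aset n ell)))"
    by (simp add: expected_T0_def Aset_def)
  also have "\<dots> \<le> ennreal (432 * real ell * real n * L^2)"
  proof (rule suminf_le_const[OF summableI])
    fix t
    have "(\<Sum>s<t. ennreal (measure_pmf.prob (rls_state n ell s) (Aset n ell)))
        = ennreal (\<Sum>s<t. measure_pmf.prob (rls_state n ell s) (Aset n ell))" by simp
    also have "\<dots> \<le> ennreal (432 * real ell * real n * L^2)"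
      using partial_bound[OF n ell, of t] B by (intro ennreal_leI) (rule order.trans)
    finally show "(\<Sum>s<t. ennreal (measure_pmf.prob (rls_state n ell s) (Aset n ell)))
        \<le> ennreal (432 * real ell * real n * L^2)" .
  qed
  finally show "expected_T0 n ell \<le> ennreal (432 * real ell * real n * (ln (real n))\<^sup>2)"
    by (simp add: L_def)
qed

end
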